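(* Let $C\in M_n(\mathbb{C})$ be a contraction, $D=I-C^*C$, $d=\operatorname{rank}D$, and let $T_j$ be its partial isometry tower. Define polynomials $\phi_{-1}=0$, $\phi_0=1$, $\phi_{m+1}(z,r)=z\phi_m(z,r)-r^2\phi_{m-1}(z,r)$. Then for every $j\ge1$, every $\theta\in\mathbb{R}$ and all $z,r\in\mathbb{C}$ with $\phi_j(z,r)\ne0$, $$\det\bigl(zI-2rH_{T_j}(\theta)\bigr)=\phi_j(z,r)^d\det\!\Bigl(zI-2rH_C(\theta)-r^2\frac{\phi_{j-1}(z,r)}{\phi_j(z,r)}D\Bigr),$$ where $2rH_X(\theta)$ means $re^{-i\theta}X+re^{i\theta}X^*$. Equivalently, writing $z=2ru$ with $r\neq 0$ and $U_k$ for the Chebyshev polynomials of the second kind, $$\det\bigl(zI-2rH_{T_j}(\theta)\bigr)=(2r)^n r^{jd}U_j(u)^d\det\bigl(uI-H_C(\theta)-\tau_j(u)D\bigr),\qquad \tau_j(u)=\frac{U_{j-1}(u)}{2U_j(u)}.$$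
   Context: For $X\in M_n(\mathbb{C})$ and $\theta\in\mathbb{R}$, $H_X(\theta):=\operatorname{Re}(e^{-i\theta}X)=\frac12(e^{-i\theta}X+e^{i\theta}X^* )$. A contraction is a matrix with $\|C\|\le 1$. For a contraction $C$, $D_C=I-C^*C$, $d=\operatorname{rank}D_C$, $B_C$ is a $d\times n$ matrix of full row rank with $B_C^*B_C=D_C$ (the matrix of $D_C^{1/2}$ restricted to $\operatorname{Im}D_C$, zero on its orthogonal complement), $\mathcal{A}(C)=\begin{bmatrix}0&B_C\\0&C\end{bmatrix}$, and the partial isometry tower is $T_0=C$, $T_{j+1}=\mathcal{A}(T_j)$. Chebyshev polynomials of the second kind: $U_{-1}=0$, $U_0=1$, $U_{k+1}(u)=2uU_k(u)-U_{k-1}(u)$. *)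

theory Defs
  imports "Jordan_Normal_Form.Schur_Decomposition" "Jordan_Normal_Form.DL_Rank"
begin

definition herm_part :: "complex mat \<Rightarrow> real \<Rightarrow> complex mat" where
  "herm_part X \<theta> = (1/2 :: complex) \<cdot>\<^sub>m
     (exp (- (\<i> * complex_of_real \<theta>)) \<cdot>\<^sub>m X + exp (\<i> * complex_of_real \<theta>) \<cdot>\<^sub>m mat_adjoint X)"

definition vnorm2 :: "complex vec \<Rightarrow> real" where
  "vnorm2 v = (\<Sum>i<dim_vec v. (cmod (v $ i))^2)"

definition contraction :: "nat \<Rightarrow> complex mat \<Rightarrow> bool" where
  "contraction n C \<longleftrightarrow> C \<in> carrier_mat n n \<and>
     (\<forall>v \<in> carrier_vec n. vnorm2 (C *\<^sub>v v) \<le> vnorm2 v)"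

definition defect :: "complex mat \<Rightarrow> complex mat" where
  "defect C = 1\<^sub>m (dim_col C) - mat_adjoint C * C"

definition mrank :: "complex mat \<Rightarrow> nat" where
  "mrank A = vec_space.rank (dim_row A) A"

definition is_B :: "complex mat \<Rightarrow> complex mat \<Rightarrow> bool" where
  "is_B C B \<longleftrightarrow> B \<in> carrier_mat (mrank (defect C)) (dim_col C) \<and>
     mrank B = dim_row B \<and> mat_adjoint B * B = defect C"

definition A_op :: "complex mat \<Rightarrow> complex mat \<Rightarrow> complex mat" where
  "A_op C B = four_block_mat (0\<^sub>m (dim_row B) (dim_row B)) B (0\<^sub>m (dim_row C) (dim_row B)) C"

definition is_tower :: "complex mat \<Rightarrow> (nat \<Rightarrow> complex mat) \<Rightarrow> bool" where
  "is_tower C T \<longleftrightarrow> T 0 = C \<and>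
     (\<forall>j. \<exists>B. is_B (T j) B \<and> T (Suc j) = A_op (T j) B)"

(* phi_m(z,r), with phi_{-1} = 0, phi_0 = 1 (so phi_1 = z) *)
fun phi :: "nat \<Rightarrow> complex \<Rightarrow> complex \<Rightarrow> complex" where
  "phi 0 z r = 1"
| "phi (Suc 0) z r = z"
| "phi (Suc (Suc m)) z r = z * phi (Suc m) z r - r^2 * phi m z r"

(* Chebyshev polynomials of the second kind, U_{-1} = 0, U_0 = 1 (so U_1 = 2u) *)
fun chebU :: "nat \<Rightarrow> complex \<Rightarrow> complex" where
  "chebU 0 u = 1"
| "chebU (Suc 0) u = 2 * u"
| "chebU (Suc (Suc m)) u = 2 * u * chebU (Suc m) u - chebU m u"

end

theory Submission imports Defs begin


lemma col_diag_lo: assumes "i < p" shows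
 "col (four_block_mat (1\<^sub>m p) (0\<^sub>m p N) (0\<^sub>m N p) (0\<^sub>m N N) :: complex mat) i = unit_vec (p+N) i"
  by (rule eq_vecI, insert assms, auto simp: unit_vec_def)

lemma col_diag_hi: assumes "p \<le> i" "i < p + N" shows
 "col (four_block_mat (1\<^sub>m p) (0\<^sub>m p N) (0\<^sub>m N p) (0\<^sub>m N N) :: complex mat) i = 0\<^sub>v (p+N)"
  by (rule eq_vecI, insert assms, auto)

lemma rank_diag: "mrank (four_block_mat (1\<^sub>m p) (0\<^sub>m p N) (0\<^sub>m N p) (0\<^sub>m N N) :: complex mat) = p"
proof -
  define A where "A = (four_block_mat (1\<^sub>m p) (0\<^sub>m p N) (0\<^sub>m N p) (0\<^sub>m N N) :: complex mat)"
  define m where "m = p + N"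
  interpret vec_space "TYPE(complex)" m .
  have A: "A \<in> carrier_mat m m" unfolding A_def m_def by auto
  define U where "U = (unit_vec m ` {..<p} :: complex vec set)"
  have colsA: "set (cols A) = (\<lambda>i. col A i) ` {..<m}" using A
    by (auto simp: cols_def)
  have cA1: "set (cols A) \<subseteq> U \<union> {0\<^sub>v m}"
  proof
    fix x assume "x \<in> set (cols A)"
    then obtain i where i: "i < m" "x = col A i" using colsA by auto
    show "x \<in> U \<union> {0\<^sub>v m}"
    proof (cases "i < p")
      case True
      have "col A i = unit_vec m i" using col_diag_lo[OF True, of N] unfolding A_def m_def by simp
      moreover have "unit_vec m i \<in> U" unfolding U_def using True by blast
      ultimately show ?thesis using i(2) by simp
    next
      case False
      have "col A i = 0\<^sub>v m" using col_diag_hi[of p i N] False i(1) unfolding A_def m_def by simp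
      thus ?thesis using i(2) by simp
    qed
  qed
  have cA2: "U \<subseteq> set (cols A)"
  proof
    fix x assume "x \<in> U"
    then obtain i where i: "i < p" "x = unit_vec m i" unfolding U_def by auto
    hence "x = col A i" using col_diag_lo[OF i(1), of N] unfolding A_def m_def by auto
    moreover have "i < m" using i(1) unfolding m_def by simp
    ultimately show "x \<in> set (cols A)" using colsA by blast
  qed
  have Usub: "U \<subseteq> set (unit_vecs m)" unfolding U_def unit_vecs_def set_map m_def
    by (intro image_mono) auto
  have li: "lin_indpt U"
  proof -
    have "lin_indpt (set (unit_vecs m))" using unit_vecs_basis unfolding basis_def by blast
    thus ?thesis using subset_li_is_li Usub by blast
  qed
  have Ucar: "U \<subseteq> carrier_vec m" unfolding U_def by auto
  have max: "maximal U (\<lambda>T. T \<subseteq> set (cols A) \<and> lin_indpt T)"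
    unfolding maximal_def
  proof (intro conjI allI impI)
    show "U \<subseteq> set (cols A)" by (rule cA2)
    show "lin_indpt U" by (rule li)
  next
    fix T assume T: "U \<subseteq> T \<and> T \<subseteq> set (cols A) \<and> lin_indpt T"
    have Tc: "T \<subseteq> carrier_vec m" using T cA1 Ucar by blast
    have "0\<^sub>v m \<notin> T" using zero_nin_lin_indpt[of T] T Tc class_semiring.one_zeroI by auto
    thus "T = U" using T cA1 by blast
  qed
  have "rank A = card U" using rank_card_indpt[OF A max] .
  also have "card U = p" unfolding U_def
  proof (subst card_image)
    show "inj_on (unit_vec m) {..<p}" unfolding inj_on_def m_def using unit_vec_eq by auto
  qed simp
  finally show ?thesis unfolding mrank_def A_def m_def by simp
qed


lemma schur_scalar:
  fixes A2 A3 A4 :: "complex mat"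
  assumes al: "\<alpha> \<noteq> 0" and A2: "A2 \<in> carrier_mat p N" and A3: "A3 \<in> carrier_mat N p"
    and A4: "A4 \<in> carrier_mat N N"
  shows "det (four_block_mat (\<alpha> \<cdot>\<^sub>m 1\<^sub>m p) A2 A3 A4) = \<alpha>^p * det (A4 - (1/\<alpha>) \<cdot>\<^sub>m (A3 * A2))"
proof -
  define M where "M = four_block_mat (\<alpha> \<cdot>\<^sub>m 1\<^sub>m p) A2 A3 A4"
  define R where "R = four_block_mat (1\<^sub>m p) ((- (1/\<alpha>)) \<cdot>\<^sub>m A2) (0\<^sub>m N p) (1\<^sub>m N)"
  have M: "M \<in> carrier_mat (p+N) (p+N)" unfolding M_def using A2 A3 A4 by auto
  have R: "R \<in> carrier_mat (p+N) (p+N)" unfolding R_def using A2 by auto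
  have b1: "\<alpha> \<cdot>\<^sub>m 1\<^sub>m p * 1\<^sub>m p + A2 * 0\<^sub>m N p = \<alpha> \<cdot>\<^sub>m 1\<^sub>m p"
    by (rule eq_matI, insert A2, auto)
  have b2: "\<alpha> \<cdot>\<^sub>m 1\<^sub>m p * ((- (1/\<alpha>)) \<cdot>\<^sub>m A2) + A2 = 0\<^sub>m p N"
  proof -
    have "\<alpha> \<cdot>\<^sub>m 1\<^sub>m p * ((- (1/\<alpha>)) \<cdot>\<^sub>m A2) = \<alpha> \<cdot>\<^sub>m ((- (1/\<alpha>)) \<cdot>\<^sub>m A2)"
      using mult_smult_assoc_mat[of "1\<^sub>m p" p p "(- (1/\<alpha>)) \<cdot>\<^sub>m A2" N \<alpha>] A2 by simp
    thus ?thesis by (intro eq_matI, insert A2 al, auto)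
  qed
  have b3: "A3 * 1\<^sub>m p + A4 * 0\<^sub>m N p = A3"
    by (rule eq_matI, insert A3 A4, auto)
  have b4: "A3 * ((- (1/\<alpha>)) \<cdot>\<^sub>m A2) + A4 = A4 - (1/\<alpha>) \<cdot>\<^sub>m (A3 * A2)"
  proof -
    have "A3 * ((- (1/\<alpha>)) \<cdot>\<^sub>m A2) = (- (1/\<alpha>)) \<cdot>\<^sub>m (A3 * A2)"
      using mult_smult_distrib[OF A3 A2] by simp
    thus ?thesis by (intro eq_matI, insert A2 A3 A4, auto)
  qed
  have "M * R = four_block_mat (\<alpha> \<cdot>\<^sub>m 1\<^sub>m p) (0\<^sub>m p N) A3 (A4 - (1/\<alpha>) \<cdot>\<^sub>m (A3 * A2))"
    unfolding M_def R_def
    by (subst mult_four_block_mat[of _ p p _ N _ N], insert A2 A3 A4, auto simp: b1 b2 b3 b4)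
  hence "det (M * R) = det (\<alpha> \<cdot>\<^sub>m 1\<^sub>m p) * det (A4 - (1/\<alpha>) \<cdot>\<^sub>m (A3 * A2))"
    using det_four_block_mat_upper_right_zero[of "\<alpha> \<cdot>\<^sub>m 1\<^sub>m p" p "0\<^sub>m p N" N A3 "A4 - (1/\<alpha>) \<cdot>\<^sub>m (A3 * A2)"] A2 A3 A4
    by (simp add: mult_carrier_mat minus_carrier_mat)
  moreover have "det (M * R) = det M * det R" using det_mult[OF M R] .
  moreover have "det R = 1" unfolding R_def
    using det_four_block_mat_lower_left_zero[of "1\<^sub>m p" p "(- (1/\<alpha>)) \<cdot>\<^sub>m A2" N "0\<^sub>m N p" "1\<^sub>m N"] A2 by auto
  ultimately show ?thesis unfolding M_def by simp
qed



lemma adj_dim[simp]: "dim_row (mat_adjoint A) = dim_col A" "dim_col (mat_adjoint A) = dim_row A"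
  unfolding mat_adjoint_def by auto

lemma adj_carrier[simp]: "A \<in> carrier_mat m n \<Longrightarrow> mat_adjoint A \<in> carrier_mat n m"
  by (intro carrier_matI) (simp_all add: carrier_matD)

lemma adj_index[simp]: "i < dim_col A \<Longrightarrow> j < dim_row A \<Longrightarrow> mat_adjoint A $$ (i,j) = cnj (A $$ (j,i))"
  unfolding mat_adjoint_def by (auto simp: mat_of_rows_def)

lemma herm_carrier[simp]: "X \<in> carrier_mat N N \<Longrightarrow> herm_part X \<theta> \<in> carrier_mat N N"
  unfolding herm_part_def by (intro carrier_matI) (simp_all add: carrier_matD)

lemma herm_index: assumes "X \<in> carrier_mat N N" "i < N" "k < N"
  shows "((2*r) \<cdot>\<^sub>m herm_part X \<theta>) $$ (i,k) =
     r * exp (- (\<i> * complex_of_real \<theta>)) * X $$ (i,k) + r * exp (\<i> * complex_of_real \<theta>) * cnj (X $$ (k,i))"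
  using assms unfolding herm_part_def by (auto simp: field_simps)

lemma Aop_carrier: "T \<in> carrier_mat N N \<Longrightarrow> B \<in> carrier_mat p N \<Longrightarrow> A_op T B \<in> carrier_mat (p+N) (p+N)"
  unfolding A_op_def by auto

lemma defect_Aop:
  assumes T: "T \<in> carrier_mat N N" and B: "B \<in> carrier_mat p N" and BB: "mat_adjoint B * B = defect T"
  shows "defect (A_op T B) = four_block_mat (1\<^sub>m p) (0\<^sub>m p N) (0\<^sub>m N p) (0\<^sub>m N N)"
proof -
  define X where "X = A_op T B"
  have X: "X = four_block_mat (0\<^sub>m p p) B (0\<^sub>m N p) T" unfolding X_def A_op_def using T B by auto
  have adjX: "mat_adjoint X = four_block_mat (0\<^sub>m p p) (0\<^sub>m p N) (mat_adjoint B) (mat_adjoint T)"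
    unfolding X by (rule eq_matI, insert T B, auto)
  have s: "mat_adjoint B * B + mat_adjoint T * T = 1\<^sub>m N"
    unfolding BB defect_def by (rule eq_matI, insert T, auto)
  have "mat_adjoint X * X = four_block_mat (0\<^sub>m p p) (0\<^sub>m p N) (0\<^sub>m N p) (1\<^sub>m N)"
    unfolding adjX unfolding X
    by (subst mult_four_block_mat[of _ p p _ N _ N], insert T B, auto simp: s)
  moreover have "dim_col X = p + N" unfolding X using T B by auto
  ultimately show ?thesis unfolding X_def[symmetric] defect_def
    by (intro eq_matI, auto)
qed

lemma step:
  assumes T: "T \<in> carrier_mat N N" and B: "B \<in> carrier_mat p N" and BB: "mat_adjoint B * B = defect T"
    and zs: "z \<noteq> s"
  shows "det (z \<cdot>\<^sub>m 1\<^sub>m (p+N) - (2*r) \<cdot>\<^sub>m herm_part (A_op T B) \<theta>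
               - s \<cdot>\<^sub>m four_block_mat (1\<^sub>m p) (0\<^sub>m p N) (0\<^sub>m N p) (0\<^sub>m N N))
    = (z-s)^p * det (z \<cdot>\<^sub>m 1\<^sub>m N - (2*r) \<cdot>\<^sub>m herm_part T \<theta> - (r^2/(z-s)) \<cdot>\<^sub>m defect T)"
proof -
  define a where "a = r * exp (- (\<i> * complex_of_real \<theta>))"
  define a' where "a' = r * exp (\<i> * complex_of_real \<theta>)"
  have aa: "a' * a = r^2" unfolding a_def a'_def
    by (simp add: power2_eq_square exp_minus field_simps)
  define A4 where "A4 = z \<cdot>\<^sub>m 1\<^sub>m N - (2*r) \<cdot>\<^sub>m herm_part T \<theta>"
  have A4: "A4 \<in> carrier_mat N N" unfolding A4_def using T by (intro minus_carrier_mat) simp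
  have X: "A_op T B \<in> carrier_mat (p+N) (p+N)" using Aop_carrier[OF T B] .
  have Xi: "A_op T B $$ (i,k) = (if i < p then (if k < p then 0 else B $$ (i, k-p))
              else (if k < p then 0 else T $$ (i-p, k-p)))" if "i < p+N" "k < p+N" for i k
    unfolding A_op_def using that T B by auto
  have eq: "z \<cdot>\<^sub>m 1\<^sub>m (p+N) - (2*r) \<cdot>\<^sub>m herm_part (A_op T B) \<theta>
               - s \<cdot>\<^sub>m four_block_mat (1\<^sub>m p) (0\<^sub>m p N) (0\<^sub>m N p) (0\<^sub>m N N)
     = four_block_mat ((z-s) \<cdot>\<^sub>m 1\<^sub>m p) ((-a) \<cdot>\<^sub>m B) ((-a') \<cdot>\<^sub>m mat_adjoint B) A4"
  proof (rule eq_matI)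
    fix i k assume ik: "i < dim_row (four_block_mat ((z-s) \<cdot>\<^sub>m 1\<^sub>m p) ((-a) \<cdot>\<^sub>m B) ((-a') \<cdot>\<^sub>m mat_adjoint B) A4)"
       "k < dim_col (four_block_mat ((z-s) \<cdot>\<^sub>m 1\<^sub>m p) ((-a) \<cdot>\<^sub>m B) ((-a') \<cdot>\<^sub>m mat_adjoint B) A4)"
    hence i: "i < p+N" and k: "k < p+N" using A4 B by auto
    have h: "((2*r) \<cdot>\<^sub>m herm_part (A_op T B) \<theta>) $$ (i,k) = a * A_op T B $$ (i,k) + a' * cnj (A_op T B $$ (k,i))"
      using herm_index[OF X i k] unfolding a_def a'_def .
    have h2: "((2*r) \<cdot>\<^sub>m herm_part T \<theta>) $$ (i-p,k-p) = a * T $$ (i-p,k-p) + a' * cnj (T $$ (k-p,i-p))"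
      if "i \<ge> p" "k \<ge> p" using herm_index[OF T, of "i-p" "k-p" r \<theta>] that i k unfolding a_def a'_def by auto
    have KX: "(2*r) \<cdot>\<^sub>m herm_part (A_op T B) \<theta> \<in> carrier_mat (p+N) (p+N)" using X by simp
    have E: "four_block_mat (1\<^sub>m p) (0\<^sub>m p N) (0\<^sub>m N p) (0\<^sub>m N N) $$ (i,k) = (if i = k \<and> i < p then 1 else 0)"
      using i k by auto
    have lhs: "(z \<cdot>\<^sub>m 1\<^sub>m (p+N) - (2*r) \<cdot>\<^sub>m herm_part (A_op T B) \<theta>
               - s \<cdot>\<^sub>m four_block_mat (1\<^sub>m p) (0\<^sub>m p N) (0\<^sub>m N p) (0\<^sub>m N N)) $$ (i,k)
       = z * (if i = k then 1 else 0) - (a * A_op T B $$ (i,k) + a' * cnj (A_op T B $$ (k,i)))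
         - s * (if i = k \<and> i < p then 1 else 0)"
      using i k KX[THEN carrier_matD(1)] KX[THEN carrier_matD(2)] h E by simp
    have KT: "(2*r) \<cdot>\<^sub>m herm_part T \<theta> \<in> carrier_mat N N" using T by simp
    have rhs: "four_block_mat ((z-s) \<cdot>\<^sub>m 1\<^sub>m p) ((-a) \<cdot>\<^sub>m B) ((-a') \<cdot>\<^sub>m mat_adjoint B) A4 $$ (i,k)
      = (if i < p then (if k < p then (if i = k then z - s else 0) else - a * B $$ (i,k-p))
         else (if k < p then - a' * cnj (B $$ (k, i-p))
         else z * (if i = k then 1 else 0) - (a * T $$ (i-p,k-p) + a' * cnj (T $$ (k-p,i-p)))))"
    proof -
      have "A4 $$ (i-p,k-p) = z * (if i = k then 1 else 0) - (a * T $$ (i-p,k-p) + a' * cnj (T $$ (k-p,i-p)))"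
        if "\<not> i < p" "\<not> k < p" using that i k h2 KT[THEN carrier_matD(1)] KT[THEN carrier_matD(2)] unfolding A4_def by auto
      thus ?thesis using i k B[THEN carrier_matD(1)] B[THEN carrier_matD(2)] A4[THEN carrier_matD(1)] A4[THEN carrier_matD(2)] by auto
    qed
    show "(z \<cdot>\<^sub>m 1\<^sub>m (p+N) - (2*r) \<cdot>\<^sub>m herm_part (A_op T B) \<theta>
               - s \<cdot>\<^sub>m four_block_mat (1\<^sub>m p) (0\<^sub>m p N) (0\<^sub>m N p) (0\<^sub>m N N)) $$ (i,k) =
        four_block_mat ((z-s) \<cdot>\<^sub>m 1\<^sub>m p) ((-a) \<cdot>\<^sub>m B) ((-a') \<cdot>\<^sub>m mat_adjoint B) A4 $$ (i,k)"
      unfolding lhs rhs Xi[OF i k] Xi[OF k i] by auto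
  qed (insert A4 B, auto simp: carrier_matD)
  have "det (four_block_mat ((z-s) \<cdot>\<^sub>m 1\<^sub>m p) ((-a) \<cdot>\<^sub>m B) ((-a') \<cdot>\<^sub>m mat_adjoint B) A4)
     = (z-s)^p * det (A4 - (1/(z-s)) \<cdot>\<^sub>m (((-a') \<cdot>\<^sub>m mat_adjoint B) * ((-a) \<cdot>\<^sub>m B)))"
    by (rule schur_scalar, insert zs B A4, auto)
  also have "((-a') \<cdot>\<^sub>m mat_adjoint B) * ((-a) \<cdot>\<^sub>m B) = r^2 \<cdot>\<^sub>m defect T"
  proof -
    have "((-a') \<cdot>\<^sub>m mat_adjoint B) * ((-a) \<cdot>\<^sub>m B) = (-a') \<cdot>\<^sub>m (mat_adjoint B * ((-a) \<cdot>\<^sub>m B))"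
      by (rule mult_smult_assoc_mat, insert B, auto)
    also have "mat_adjoint B * ((-a) \<cdot>\<^sub>m B) = (-a) \<cdot>\<^sub>m (mat_adjoint B * B)"
      by (rule mult_smult_distrib, insert B, auto)
    finally have eq2: "((-a') \<cdot>\<^sub>m mat_adjoint B) * ((-a) \<cdot>\<^sub>m B) = (-a') \<cdot>\<^sub>m ((-a) \<cdot>\<^sub>m defect T)"
      unfolding BB .
    have sc: "a' * (a * x) = r^2 * x" for x by (simp add: aa[symmetric] algebra_simps)
    show ?thesis unfolding eq2 by (rule eq_matI) (simp_all add: sc)
  qed
  also have "A4 - (1/(z-s)) \<cdot>\<^sub>m (r^2 \<cdot>\<^sub>m defect T) = z \<cdot>\<^sub>m 1\<^sub>m N - (2*r) \<cdot>\<^sub>m herm_part T \<theta> - (r^2/(z-s)) \<cdot>\<^sub>m defect T"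
    unfolding A4_def defect_def by (rule eq_matI, insert T, auto)
  finally show ?thesis unfolding eq .
qed



lemma tower_facts:
  assumes C: "C \<in> carrier_mat n n" and tw: "is_tower C T" and d: "d = mrank (defect C)"
  shows "\<exists>Bs. \<forall>k. T (Suc k) = A_op (T k) (Bs k) \<and> Bs k \<in> carrier_mat d (n + k*d)
     \<and> mat_adjoint (Bs k) * Bs k = defect (T k) \<and> T k \<in> carrier_mat (n+k*d) (n+k*d)
     \<and> defect (T (Suc k)) = four_block_mat (1\<^sub>m d) (0\<^sub>m d (n+k*d)) (0\<^sub>m (n+k*d) d) (0\<^sub>m (n+k*d) (n+k*d))"
proof -
  define Bs where "Bs j = (SOME B. is_B (T j) B \<and> T (Suc j) = A_op (T j) B)" for j
  have Bs: "is_B (T j) (Bs j) \<and> T (Suc j) = A_op (T j) (Bs j)" for j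
  proof -
    have "\<exists>B. is_B (T j) B \<and> T (Suc j) = A_op (T j) B" using tw unfolding is_tower_def by blast
    thus ?thesis unfolding Bs_def by (rule someI_ex)
  qed
  have inv: "T k \<in> carrier_mat (n+k*d) (n+k*d) \<and> mrank (defect (T k)) = d" for k
  proof (induction k)
    case 0 thus ?case using C d tw unfolding is_tower_def by auto
  next
    case (Suc k)
    have Tk: "T k \<in> carrier_mat (n+k*d) (n+k*d)" using Suc by blast
    have B: "Bs k \<in> carrier_mat d (n+k*d)" and BB: "mat_adjoint (Bs k) * Bs k = defect (T k)"
      using Bs[of k] Suc Tk unfolding is_B_def by (auto simp: carrier_matD)
    have e: "d + (n + k*d) = n + Suc k * d" by simp
    have "T (Suc k) \<in> carrier_mat (d + (n+k*d)) (d + (n+k*d))"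
      using Bs[of k] Aop_carrier[OF Tk B] by simp
    moreover have "defect (T (Suc k)) = four_block_mat (1\<^sub>m d) (0\<^sub>m d (n+k*d)) (0\<^sub>m (n+k*d) d) (0\<^sub>m (n+k*d) (n+k*d))"
      using Bs[of k] defect_Aop[OF Tk B BB] by simp
    ultimately show ?case using rank_diag[of d "n+k*d"] unfolding e by simp
  qed
  show ?thesis
  proof (intro exI allI conjI)
    fix k
    have Tk: "T k \<in> carrier_mat (n+k*d) (n+k*d)" using inv by blast
    show B: "Bs k \<in> carrier_mat d (n+k*d)" and BB: "mat_adjoint (Bs k) * Bs k = defect (T k)"
      using Bs[of k] inv[of k] Tk unfolding is_B_def by (auto simp: carrier_matD)
    show "T (Suc k) = A_op (T k) (Bs k)" using Bs by blast
    show "T k \<in> carrier_mat (n+k*d) (n+k*d)" by (rule Tk)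
    show "defect (T (Suc k)) = four_block_mat (1\<^sub>m d) (0\<^sub>m d (n+k*d)) (0\<^sub>m (n+k*d) d) (0\<^sub>m (n+k*d) (n+k*d))"
      using Bs[of k] defect_Aop[OF Tk B BB] by simp
  qed
qed

definition GG where "GG T z r \<theta> k s = det (z \<cdot>\<^sub>m 1\<^sub>m (dim_row (T k)) - (2*r) \<cdot>\<^sub>m herm_part (T k) \<theta> - s \<cdot>\<^sub>m defect (T k))"

lemma GG_step:
  assumes C: "C \<in> carrier_mat n n" and tw: "is_tower C T" and d: "d = mrank (defect C)"
    and zs: "z \<noteq> s"
  shows "GG T z r \<theta> (Suc k) s = (z - s)^d * GG T z r \<theta> k (r^2/(z-s))"
proof -
  obtain Bs where Bs: "\<And>k. T (Suc k) = A_op (T k) (Bs k) \<and> Bs k \<in> carrier_mat d (n + k*d)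
     \<and> mat_adjoint (Bs k) * Bs k = defect (T k) \<and> T k \<in> carrier_mat (n+k*d) (n+k*d)
     \<and> defect (T (Suc k)) = four_block_mat (1\<^sub>m d) (0\<^sub>m d (n+k*d)) (0\<^sub>m (n+k*d) d) (0\<^sub>m (n+k*d) (n+k*d))"
    using tower_facts[OF C tw d] by blast
  have Tk: "T k \<in> carrier_mat (n+k*d) (n+k*d)" and B: "Bs k \<in> carrier_mat d (n+k*d)"
    and BB: "mat_adjoint (Bs k) * Bs k = defect (T k)" using Bs by blast+
  have dimS: "dim_row (T (Suc k)) = d + (n+k*d)" using Bs[of k] Aop_carrier[OF Tk B] by (simp add: carrier_matD)
  have dimk: "dim_row (T k) = n+k*d" using Tk by (simp add: carrier_matD)
  have dS: "defect (T (Suc k)) = four_block_mat (1\<^sub>m d) (0\<^sub>m d (n+k*d)) (0\<^sub>m (n+k*d) d) (0\<^sub>m (n+k*d) (n+k*d))"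
    and Ts: "T (Suc k) = A_op (T k) (Bs k)" using Bs[of k] by blast+
  show ?thesis unfolding GG_def dimS dimk dS unfolding Ts
    using step[OF Tk B BB zs, of r \<theta>] .
qed



definition sv where "sv z r m = (if m = 0 then 0 else r^2 * phi (m-1) z r / phi m z r)"

lemma z_minus_sv: assumes "phi m z r \<noteq> 0" shows "z - sv z r m = phi (Suc m) z r / phi m z r"
proof (cases m)
  case 0 thus ?thesis by (simp add: sv_def)
next
  case (Suc m') thus ?thesis using assms by (simp add: sv_def field_simps)
qed

lemma chain:
  assumes C: "C \<in> carrier_mat n n" and tw: "is_tower C T" and d: "d = mrank (defect C)"
  shows "(\<forall>i \<le> m+k. phi i z r \<noteq> 0) \<Longrightarrow>
    phi m z r ^ d * GG T z r \<theta> k (sv z r m) = phi (m+k) z r ^ d * GG T z r \<theta> 0 (sv z r (m+k))"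
proof (induction k arbitrary: m)
  case 0 thus ?case by simp
next
  case (Suc k)
  have nz: "phi m z r \<noteq> 0" "phi (Suc m) z r \<noteq> 0" using Suc.prems by auto
  have zm: "z - sv z r m = phi (Suc m) z r / phi m z r" using z_minus_sv[OF nz(1)] .
  hence zs: "z \<noteq> sv z r m" using nz by auto
  have s0: "sv z r (Suc m) = r^2 * phi m z r / phi (Suc m) z r" unfolding sv_def by simp
  have s1: "r^2 / (z - sv z r m) = sv z r (Suc m)" unfolding zm s0 using nz by (simp add: field_simps)
  have p: "phi m z r ^ d * (z - sv z r m)^d = phi (Suc m) z r ^ d"
    unfolding zm power_mult_distrib[symmetric] using nz by simp
  have "phi m z r ^ d * GG T z r \<theta> (Suc k) (sv z r m)
      = phi m z r ^ d * ((z - sv z r m)^d * GG T z r \<theta> k (sv z r (Suc m)))"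
    using GG_step[OF C tw d zs, of r \<theta> k] s1 by simp
  also have "\<dots> = phi (Suc m) z r ^ d * GG T z r \<theta> k (sv z r (Suc m))"
    using p by (simp add: mult.assoc[symmetric])
  also have "\<dots> = phi (Suc m + k) z r ^ d * GG T z r \<theta> 0 (sv z r (Suc m + k))"
    using Suc.IH[of "Suc m"] Suc.prems by simp
  finally show ?case by simp
qed

lemma main_good:
  assumes C: "C \<in> carrier_mat n n" and tw: "is_tower C T" and d: "d = mrank (defect C)"
    and j: "j \<ge> 1" and nz: "\<forall>i \<le> j. phi i z r \<noteq> 0"
  shows "det (z \<cdot>\<^sub>m 1\<^sub>m (dim_row (T j)) - (2 * r) \<cdot>\<^sub>m herm_part (T j) \<theta>)
           = phi j z r ^ d *
             det (z \<cdot>\<^sub>m 1\<^sub>m n - (2 * r) \<cdot>\<^sub>m herm_part C \<theta>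
                  - (r^2 * phi (j - 1) z r / phi j z r) \<cdot>\<^sub>m defect C)"
proof -
  obtain Bs where Bs: "\<And>k. T (Suc k) = A_op (T k) (Bs k) \<and> Bs k \<in> carrier_mat d (n + k*d)
     \<and> mat_adjoint (Bs k) * Bs k = defect (T k) \<and> T k \<in> carrier_mat (n+k*d) (n+k*d)
     \<and> defect (T (Suc k)) = four_block_mat (1\<^sub>m d) (0\<^sub>m d (n+k*d)) (0\<^sub>m (n+k*d) d) (0\<^sub>m (n+k*d) (n+k*d))"
    using tower_facts[OF C tw d] by blast
  have Tj: "T j \<in> carrier_mat (n+j*d) (n+j*d)" using Bs by blast
  have ch: "phi 0 z r ^ d * GG T z r \<theta> j (sv z r 0) = phi (0+j) z r ^ d * GG T z r \<theta> 0 (sv z r (0+j))"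
    using chain[OF C tw d, of 0 j z r \<theta>] nz by simp
  have T0: "T 0 = C" using tw unfolding is_tower_def by blast
  have dT: "defect (T j) \<in> carrier_mat (n+j*d) (n+j*d)" unfolding defect_def
    by (meson minus_carrier_mat mult_carrier_mat adj_carrier Tj)
  have KT: "(2 * r) \<cdot>\<^sub>m herm_part (T j) \<theta> \<in> carrier_mat (n+j*d) (n+j*d)" using Tj by simp
  have e0: "z \<cdot>\<^sub>m 1\<^sub>m (dim_row (T j)) - (2 * r) \<cdot>\<^sub>m herm_part (T j) \<theta> - 0 \<cdot>\<^sub>m defect (T j)
      = z \<cdot>\<^sub>m 1\<^sub>m (dim_row (T j)) - (2 * r) \<cdot>\<^sub>m herm_part (T j) \<theta>"
  proof -
    have H: "herm_part (T j) \<theta> \<in> carrier_mat (n+j*d) (n+j*d)" using Tj by simp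
    show ?thesis
      by (rule eq_matI, insert Tj[THEN carrier_matD(1)] dT[THEN carrier_matD(1)] dT[THEN carrier_matD(2)]
       H[THEN carrier_matD(1)] H[THEN carrier_matD(2)], auto)
  qed
  have "GG T z r \<theta> j 0 = det (z \<cdot>\<^sub>m 1\<^sub>m (dim_row (T j)) - (2 * r) \<cdot>\<^sub>m herm_part (T j) \<theta>)"
    unfolding GG_def e0 ..
  moreover have "GG T z r \<theta> 0 (sv z r j) = det (z \<cdot>\<^sub>m 1\<^sub>m n - (2 * r) \<cdot>\<^sub>m herm_part C \<theta>
                  - (r^2 * phi (j - 1) z r / phi j z r) \<cdot>\<^sub>m defect C)"
    unfolding GG_def T0 sv_def using j C by (simp add: carrier_matD)
  ultimately show ?thesis using ch by (simp add: sv_def)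
qed



fun pp :: "complex \<Rightarrow> nat \<Rightarrow> complex poly" where
  "pp r 0 = 1"
| "pp r (Suc 0) = pCons 0 1"
| "pp r (Suc (Suc m)) = pCons 0 (pp r (Suc m)) - smult (r^2) (pp r m)"

lemma poly_pp: "poly (pp r m) z = phi m z r"
  by (induction r m rule: pp.induct) auto

lemma pp_deg_coeff: "degree (pp r m) \<le> m \<and> coeff (pp r m) m = 1"
proof (induction r m rule: pp.induct)
  case (1 r) thus ?case by simp
next
  case (2 r) thus ?case by simp
next
  case (3 r m)
  have d1: "degree (pCons 0 (pp r (Suc m))) \<le> Suc (Suc m)"
    using 3(1) by (simp add: degree_pCons_le le_trans)
  have d2: "degree (smult (r^2) (pp r m)) \<le> Suc (Suc m)"
    using 3(2) degree_smult_le[of "r^2" "pp r m"] by linarith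
  have "degree (pp r (Suc (Suc m))) \<le> Suc (Suc m)"
    using degree_diff_le[OF d1 d2] by simp
  moreover have "coeff (pp r m) (Suc (Suc m)) = 0"
    using 3(2) by (intro coeff_eq_0) linarith
  ultimately show ?case using 3(1) by simp
qed

lemma pp_nz: "pp r m \<noteq> 0"
  using pp_deg_coeff[of r m] by auto

lemma bad_finite: "finite {z. \<exists>i\<le>j. phi i z r = 0}"
proof -
  have "{z. \<exists>i\<le>j. phi i z r = 0} = (\<Union>i\<in>{..j}. {z. poly (pp r i) z = 0})"
    by (auto simp: poly_pp)
  thus ?thesis using poly_roots_finite[OF pp_nz] by simp
qed

lemma eventually_avoid_finite:
  fixes z0 :: complex
  assumes "finite S" shows "eventually (\<lambda>z. z \<notin> S) (at z0)"
proof -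
  have "\<forall>y\<in>S. eventually (\<lambda>z. z \<noteq> y) (at z0)" using eventually_neq_at_within by blast
  from eventually_ball_finite[OF assms this] show ?thesis
    by (rule eventually_mono) blast
qed

lemma phi_cont: "isCont (\<lambda>z. phi m z r) z0"
  by (induction m z0 r rule: phi.induct) (auto intro!: continuous_intros)

lemma det_cont:
  fixes M :: "complex \<Rightarrow> complex mat"
  assumes car: "\<And>z. M z \<in> carrier_mat N N"
    and ent: "\<And>i k. i < N \<Longrightarrow> k < N \<Longrightarrow> isCont (\<lambda>z. M z $$ (i,k)) z0"
  shows "isCont (\<lambda>z. det (M z)) z0"
proof -
  have eq: "(\<lambda>z. det (M z)) = (\<lambda>z. \<Sum>p\<in>{p. p permutes {0..<N}}. signof p * (\<Prod>i=0..<N. M z $$ (i, p i)))"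
    using det_def'[OF car] by (intro ext) simp
  have "continuous (at z0) (\<lambda>z. \<Sum>p\<in>{p. p permutes {0..<N}}. signof p * (\<Prod>i=0..<N. M z $$ (i, p i)))"
  proof (intro continuous_intros)
    fix p i assume p: "p \<in> {p. p permutes {0..<N}}" and i: "i \<in> {0..<N}"
    have "p i < N" using p i permutes_in_image[of p "{0..<N}" i] by auto
    thus "continuous (at z0) (\<lambda>z. M z $$ (i, p i))" using ent i by auto
  qed
  thus ?thesis unfolding eq .
qed



lemma part1:
  assumes C: "C \<in> carrier_mat n n" and tw: "is_tower C T" and d: "d = mrank (defect C)"
    and j: "j \<ge> 1" and nz: "phi j z0 r \<noteq> 0"
  shows "det (z0 \<cdot>\<^sub>m 1\<^sub>m (dim_row (T j)) - (2 * r) \<cdot>\<^sub>m herm_part (T j) \<theta>)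
           = phi j z0 r ^ d *
             det (z0 \<cdot>\<^sub>m 1\<^sub>m n - (2 * r) \<cdot>\<^sub>m herm_part C \<theta>
                  - (r^2 * phi (j - 1) z0 r / phi j z0 r) \<cdot>\<^sub>m defect C)"
proof -
  define L where "L z = det (z \<cdot>\<^sub>m 1\<^sub>m (dim_row (T j)) - (2 * r) \<cdot>\<^sub>m herm_part (T j) \<theta>)" for z
  define R where "R z = phi j z r ^ d *
             det (z \<cdot>\<^sub>m 1\<^sub>m n - (2 * r) \<cdot>\<^sub>m herm_part C \<theta>
                  - (r^2 * phi (j - 1) z r / phi j z r) \<cdot>\<^sub>m defect C)" for z
  have ev: "eventually (\<lambda>z. L z = R z) (at z0)"
    using eventually_avoid_finite[OF bad_finite[of j r], of z0]
  proof (rule eventually_mono)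
    fix z assume "z \<notin> {z. \<exists>i\<le>j. phi i z r = 0}"
    hence "\<forall>i\<le>j. phi i z r \<noteq> 0" by blast
    thus "L z = R z" unfolding L_def R_def using main_good[OF C tw d j] by blast
  qed
  obtain Bs where Bs: "\<And>k. T (Suc k) = A_op (T k) (Bs k) \<and> Bs k \<in> carrier_mat d (n + k*d)
     \<and> mat_adjoint (Bs k) * Bs k = defect (T k) \<and> T k \<in> carrier_mat (n+k*d) (n+k*d)
     \<and> defect (T (Suc k)) = four_block_mat (1\<^sub>m d) (0\<^sub>m d (n+k*d)) (0\<^sub>m (n+k*d) d) (0\<^sub>m (n+k*d) (n+k*d))"
    using tower_facts[OF C tw d] by blast
  define Nj where "Nj = n + j*d"
  have Tj: "T j \<in> carrier_mat Nj Nj" using Bs unfolding Nj_def by blast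
  have dTj: "dim_row (T j) = Nj" using Tj by (simp add: carrier_matD)
  define K where "K = (2 * r) \<cdot>\<^sub>m herm_part (T j) \<theta>"
  have K: "K \<in> carrier_mat Nj Nj" unfolding K_def using Tj by simp
  have Kd: "dim_row K = Nj" "dim_col K = Nj" using K by (simp_all add: carrier_matD)
  have cL: "isCont L z0"
    unfolding L_def K_def[symmetric] dTj
  proof (rule det_cont[of _ Nj])
    fix z show "z \<cdot>\<^sub>m 1\<^sub>m Nj - K \<in> carrier_mat Nj Nj" using K by (intro minus_carrier_mat)
  next
    fix i k assume ik: "i < Nj" "k < Nj"
    have "(\<lambda>z. (z \<cdot>\<^sub>m 1\<^sub>m Nj - K) $$ (i,k)) = (\<lambda>z. z * (if i = k then 1 else 0) - K $$ (i,k))"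
      using ik Kd by (intro ext) simp
    thus "isCont (\<lambda>z. (z \<cdot>\<^sub>m 1\<^sub>m Nj - K) $$ (i,k)) z0" by (auto intro!: continuous_intros)
  qed
  define KC where "KC = (2 * r) \<cdot>\<^sub>m herm_part C \<theta>"
  have KC: "KC \<in> carrier_mat n n" unfolding KC_def using C by simp
  have KCd: "dim_row KC = n" "dim_col KC = n" using KC by (simp_all add: carrier_matD)
  have DC: "defect C \<in> carrier_mat n n" unfolding defect_def
    by (meson minus_carrier_mat mult_carrier_mat adj_carrier C)
  have DCd: "dim_row (defect C) = n" "dim_col (defect C) = n" using DC by (simp_all add: carrier_matD)
  have cR: "isCont R z0"
    unfolding R_def KC_def[symmetric]
  proof (intro continuous_intros phi_cont det_cont[of _ n])
    fix z show "z \<cdot>\<^sub>m 1\<^sub>m n - KC - (r^2 * phi (j - 1) z r / phi j z r) \<cdot>\<^sub>m defect C \<in> carrier_mat n n"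
      using DC by (intro minus_carrier_mat) simp
  next
    fix i k assume ik: "i < n" "k < n"
    have "(\<lambda>z. (z \<cdot>\<^sub>m 1\<^sub>m n - KC - (r^2 * phi (j - 1) z r / phi j z r) \<cdot>\<^sub>m defect C) $$ (i,k))
      = (\<lambda>z. z * (if i = k then 1 else 0) - KC $$ (i,k) - (r^2 * phi (j - 1) z r / phi j z r) * defect C $$ (i,k))"
      using ik KCd DCd by (intro ext) simp
    moreover have "isCont (\<lambda>z. z * (if i = k then 1 else 0) - KC $$ (i,k) - (r^2 * phi (j - 1) z r / phi j z r) * defect C $$ (i,k)) z0"
      using nz by (auto intro!: continuous_intros phi_cont)
    ultimately show "isCont (\<lambda>z. (z \<cdot>\<^sub>m 1\<^sub>m n - KC - (r^2 * phi (j - 1) z r / phi j z r) \<cdot>\<^sub>m defect C) $$ (i,k)) z0"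
      by simp
  qed
  have t1: "L \<midarrow>z0\<rightarrow> L z0" using cL unfolding isCont_def .
  have "R \<midarrow>z0\<rightarrow> R z0" using cR unfolding isCont_def .
  hence t2: "L \<midarrow>z0\<rightarrow> R z0" using tendsto_cong[OF ev] by blast
  have "L z0 = R z0" using LIM_unique[OF t1 t2] .
  thus ?thesis unfolding L_def R_def .
qed

lemma phi_cheb: "phi m (2 * r * u) r = r^m * chebU m u"
  by (induction m u rule: chebU.induct) (auto simp: algebra_simps power2_eq_square)

lemma part2:
  assumes C: "C \<in> carrier_mat n n" and tw: "is_tower C T" and d: "d = mrank (defect C)"
    and j: "j \<ge> 1" and r: "r \<noteq> 0" and U: "chebU j u \<noteq> 0"
  shows "det ((2 * r * u) \<cdot>\<^sub>m 1\<^sub>m (dim_row (T j)) - (2 * r) \<cdot>\<^sub>m herm_part (T j) \<theta>)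
           = (2 * r) ^ n * r ^ (j * d) * chebU j u ^ d *
             det (u \<cdot>\<^sub>m 1\<^sub>m n - herm_part C \<theta>
                  - (chebU (j - 1) u / (2 * chebU j u)) \<cdot>\<^sub>m defect C)"
proof -
  have pj: "phi j (2 * r * u) r = r^j * chebU j u" by (rule phi_cheb)
  have nz: "phi j (2 * r * u) r \<noteq> 0" unfolding pj using r U by simp
  obtain j' where j': "j = Suc j'" using j by (cases j) auto
  have cst: "r^2 * phi (j-1) (2 * r * u) r / phi j (2 * r * u) r = 2 * r * (chebU (j - 1) u / (2 * chebU j u))"
    unfolding j' diff_Suc_1 phi_cheb using r U[unfolded j'] by (simp add: field_simps power2_eq_square)
  define H where "H = herm_part C \<theta>"
  have H: "H \<in> carrier_mat n n" unfolding H_def using C by simp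
  have Hd: "dim_row H = n" "dim_col H = n" using H by (simp_all add: carrier_matD)
  have DC: "defect C \<in> carrier_mat n n" unfolding defect_def
    by (meson minus_carrier_mat mult_carrier_mat adj_carrier C)
  have DCd: "dim_row (defect C) = n" "dim_col (defect C) = n" using DC by (simp_all add: carrier_matD)
  define c where "c = chebU (j - 1) u / (2 * chebU j u)"
  have meq: "(2 * r * u) \<cdot>\<^sub>m 1\<^sub>m n - (2 * r) \<cdot>\<^sub>m H - (2 * r * c) \<cdot>\<^sub>m defect C
     = (2 * r) \<cdot>\<^sub>m (u \<cdot>\<^sub>m 1\<^sub>m n - H - c \<cdot>\<^sub>m defect C)"
    by (rule eq_matI) (simp_all add: Hd DCd algebra_simps)
  have "det ((2 * r * u) \<cdot>\<^sub>m 1\<^sub>m (dim_row (T j)) - (2 * r) \<cdot>\<^sub>m herm_part (T j) \<theta>)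
      = phi j (2 * r * u) r ^ d * det ((2 * r * u) \<cdot>\<^sub>m 1\<^sub>m n - (2 * r) \<cdot>\<^sub>m H - (2 * r * c) \<cdot>\<^sub>m defect C)"
    using part1[OF C tw d j nz, of \<theta>] unfolding cst H_def c_def .
  also have "\<dots> = (r^j * chebU j u) ^ d * ((2 * r) ^ n * det (u \<cdot>\<^sub>m 1\<^sub>m n - H - c \<cdot>\<^sub>m defect C))"
    unfolding meq pj by (simp add: DCd)
  also have "\<dots> = (2 * r) ^ n * r ^ (j * d) * chebU j u ^ d * det (u \<cdot>\<^sub>m 1\<^sub>m n - H - c \<cdot>\<^sub>m defect C)"
    by (simp add: power_mult_distrib power_mult)
  finally show ?thesis unfolding H_def c_def .
qed

theorem mainTheorem3:
  fixes n :: nat and C :: "complex mat" and T :: "nat \<Rightarrow> complex mat"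
  assumes "contraction n C"
    and "is_tower C T"
    and "d = mrank (defect C)"
    and "j \<ge> 1"
  shows "(\<forall>(\<theta>::real) (z::complex) (r::complex). phi j z r \<noteq> 0 \<longrightarrow>
           det (z \<cdot>\<^sub>m 1\<^sub>m (dim_row (T j)) - (2 * r) \<cdot>\<^sub>m herm_part (T j) \<theta>)
           = phi j z r ^ d *
             det (z \<cdot>\<^sub>m 1\<^sub>m n - (2 * r) \<cdot>\<^sub>m herm_part C \<theta>
                  - (r^2 * phi (j - 1) z r / phi j z r) \<cdot>\<^sub>m defect C))
       \<and> (\<forall>(\<theta>::real) (u::complex) (r::complex). r \<noteq> 0 \<longrightarrow> chebU j u \<noteq> 0 \<longrightarrow>
           det ((2 * r * u) \<cdot>\<^sub>m 1\<^sub>m (dim_row (T j)) - (2 * r) \<cdot>\<^sub>m herm_part (T j) \<theta>)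
           = (2 * r) ^ n * r ^ (j * d) * chebU j u ^ d *
             det (u \<cdot>\<^sub>m 1\<^sub>m n - herm_part C \<theta>
                  - (chebU (j - 1) u / (2 * chebU j u)) \<cdot>\<^sub>m defect C))"
proof -
  have C: "C \<in> carrier_mat n n" using assms(1) unfolding contraction_def by blast
  show ?thesis using part1[OF C assms(2,3,4)] part2[OF C assms(2,3,4)] by blast
qed

end
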